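(* Let $\mathbb{X}\subseteq\mathbb{P}^2$ be a $\Bbbk$-configuration of type $(d_1,\dots,d_s)$ defined by subsets $\mathbb{X}_1,\dots,\mathbb{X}_s$ and lines $\mathbb{L}_1,\dots,\mathbb{L}_s$, and let $\mathbb{L}$ be a line with $|\mathbb{L}\cap\mathbb{X}|=d_s$. (i) If $d_s>s$, then $\mathbb{L}\in\{\mathbb{L}_1,\dots,\mathbb{L}_s\}$. (ii) If $\mathbb{L}=\mathbb{L}_i$, then $d_j=d_s-s+j$ for all $j=i,\dots,s$.
   Context: $\Bbbk$ is an algebraically closed field. A $\Bbbk$-configuration of type $(d_1,\dots,d_s)$ is a finite set $\mathbb{X}\subseteq\mathbb{P}^2$ for which there exist integers $1\le d_1<\cdots<d_s$, subsets $\mathbb{X}_1,\dots,\mathbb{X}_s$ of $\mathbb{X}$ and distinct lines $\mathbb{L}_1,\dots,\mathbb{L}_s\subseteq\mathbb{P}^2$ such that (1) $\mathbb{X}=\bigcup_{i=1}^s\mathbb{X}_i$; (2) $|\mathbb{X}_i|=d_i$ and $\mathbb{X}_i\subseteq\mathbb{L}_i$ for each $i$; (3) for $1<i\le s$, $\mathbb{L}_i$ contains no point of $\mathbb{X}_j$ for any $j<i$. We say $\mathbb{X}$ is defined by these subsets and lines. *)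

theory Defs
  imports "HOL-Computational_Algebra.Polynomial"
begin

definition alg_closed :: "'k::field itself \<Rightarrow> bool" where
  "alg_closed _ \<longleftrightarrow> (\<forall>p :: 'k poly. degree p \<ge> 1 \<longrightarrow> (\<exists>x. poly p x = 0))"

text \<open>Points of the projective plane P^2 over 'k: one-dimensional subspaces of k^3,
  i.e. the sets of all scalar multiples of a nonzero vector.\<close>
type_synonym 'k ppoint = "('k \<times> 'k \<times> 'k) set"

definition scale3 :: "'k::field \<Rightarrow> 'k \<times> 'k \<times> 'k \<Rightarrow> 'k \<times> 'k \<times> 'k" where
  "scale3 c v = (case v of (x, y, z) \<Rightarrow> (c * x, c * y, c * z))"

definition is_point :: "'k::field ppoint \<Rightarrow> bool" where
  "is_point P \<longleftrightarrow> (\<exists>v. v \<noteq> (0, 0, 0) \<and> P = (\<lambda>c. scale3 c v) ` UNIV)"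

definition line_of :: "'k::field \<times> 'k \<times> 'k \<Rightarrow> 'k ppoint set" where
  "line_of u = {P. is_point P \<and> (\<forall>(x, y, z) \<in> P. (case u of (a, b, c) \<Rightarrow> a * x + b * y + c * z = 0))}"

definition is_line :: "'k::field ppoint set \<Rightarrow> bool" where
  "is_line L \<longleftrightarrow> (\<exists>u. u \<noteq> (0, 0, 0) \<and> L = line_of u)"

definition kconfig ::
  "'k::field ppoint set \<Rightarrow> nat \<Rightarrow> (nat \<Rightarrow> nat) \<Rightarrow> (nat \<Rightarrow> 'k ppoint set) \<Rightarrow> (nat \<Rightarrow> 'k ppoint set) \<Rightarrow> bool"
where
  "kconfig X s d Xs Ls \<longleftrightarrow>
     s \<ge> 1 \<and> 1 \<le> d 1 \<and> (\<forall>i\<in>{1..s}. \<forall>j\<in>{1..s}. i < j \<longrightarrow> d i < d j) \<and>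
     X = (\<Union>i\<in>{1..s}. Xs i) \<and>
     (\<forall>i\<in>{1..s}. is_line (Ls i) \<and> finite (Xs i) \<and> card (Xs i) = d i \<and> Xs i \<subseteq> Ls i) \<and>
     inj_on Ls {1..s} \<and>
     (\<forall>i\<in>{1..s}. \<forall>j\<in>{1..s}. j < i \<longrightarrow> Ls i \<inter> Xs j = {})"

end

theory Submission imports Defs begin

definition dot3 :: "'k::field \<times> 'k \<times> 'k \<Rightarrow> 'k \<times> 'k \<times> 'k \<Rightarrow> 'k" where
  "dot3 u v = (case u of (a,b,c) \<Rightarrow> case v of (x,y,z) \<Rightarrow> a*x+b*y+c*z)"
definition cross3 :: "'k::field \<times> 'k \<times> 'k \<Rightarrow> 'k \<times> 'k \<times> 'k \<Rightarrow> 'k \<times> 'k \<times> 'k" where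
  "cross3 u v = (case u of (a,b,c) \<Rightarrow> case v of (x,y,z) \<Rightarrow> (b*z - c*y, c*x - a*z, a*y - b*x))"

lemma dot3_scale: "dot3 u (scale3 c p) = c * dot3 u p"
  by (cases u; cases p) (simp add: dot3_def scale3_def algebra_simps)

lemma dot3_scale_l: "dot3 (scale3 c u) p = c * dot3 u p"
  by (cases u; cases p) (simp add: dot3_def scale3_def algebra_simps)

lemma par:
  fixes r v :: "'k::field \<times> 'k \<times> 'k"
  assumes "cross3 r v = (0,0,0)" "r \<noteq> (0,0,0)"
  shows "\<exists>c. v = scale3 c r"
proof -
  obtain r1 r2 r3 where r: "r = (r1,r2,r3)" by (cases r) auto
  obtain v1 v2 v3 where v: "v = (v1,v2,v3)" by (cases v) auto
  have e: "r2*v3 = r3*v2" "r3*v1 = r1*v3" "r1*v2 = r2*v1"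
    using assms(1) by (auto simp: r v cross3_def)
  show ?thesis
  proof (cases "r1 = 0")
    case False
    show ?thesis
      apply (rule exI[of _ "v1/r1"])
      using False e by (auto simp: r v scale3_def field_simps)
  next
    case z1: True
    show ?thesis
    proof (cases "r2 = 0")
      case False
      show ?thesis
        apply (rule exI[of _ "v2/r2"])
        using False e by (auto simp: r v scale3_def field_simps)
    next
      case True
      with z1 assms(2) have "r3 \<noteq> 0" by (auto simp: r)
      show ?thesis
        apply (rule exI[of _ "v3/r3"])
        using \<open>r3 \<noteq> 0\<close> e by (auto simp: r v scale3_def field_simps)
    qed
  qed
qed

lemma mem_line:
  assumes "P = range (\<lambda>c. scale3 c p)" "p \<noteq> (0,0,0)"
  shows "P \<in> line_of u \<longleftrightarrow> dot3 u p = 0"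
proof -
  have ip: "is_point P" using assms unfolding is_point_def by blast
  have "(\<forall>(x, y, z) \<in> P. (case u of (a, b, c) \<Rightarrow> a * x + b * y + c * z = 0))
     \<longleftrightarrow> (\<forall>v\<in>P. dot3 u v = 0)"
    by (cases u) (auto simp: dot3_def)
  also have "\<dots> \<longleftrightarrow> dot3 u p = 0"
  proof
    assume "\<forall>v\<in>P. dot3 u v = 0"
    moreover have "p \<in> P" using assms(1) by (auto simp: image_iff scale3_def intro!: exI[of _ 1] split: prod.splits)
    ultimately show "dot3 u p = 0" by blast
  qed (auto simp: assms(1) dot3_scale)
  finally show ?thesis using ip by (simp add: line_of_def)
qed

lemma cross_zero_same:
  fixes p q :: "'k::field \<times> 'k \<times> 'k"
  assumes "cross3 p q = (0,0,0)" "p \<noteq> (0,0,0)" "q \<noteq> (0,0,0)"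
  shows "range (\<lambda>c. scale3 c p) = range (\<lambda>c. scale3 c q)"
proof -
  obtain c where c: "q = scale3 c p" using par assms by blast
  have "c \<noteq> 0" using c assms(3) by (cases p) (auto simp: scale3_def)
  have sc: "scale3 a (scale3 b x) = scale3 (a*b) x" for a b and x :: "'k \<times> 'k \<times> 'k"
    by (cases x) (simp add: scale3_def mult.assoc)
  show ?thesis
  proof (auto simp: c sc)
    fix a show "scale3 a p \<in> range (\<lambda>x. scale3 (x * c) p)"
      using \<open>c \<noteq> 0\<close> by (intro image_eqI[of _ _ "a/c"]) auto
  qed
qed

lemma key:
  fixes A B :: "'k::field ppoint set"
  assumes "is_line A" "is_line B" "A \<noteq> B" "P \<in> A" "P \<in> B" "Q \<in> A" "Q \<in> B"
  shows "P = Q"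
proof (rule ccontr)
  assume ne: "P \<noteq> Q"
  obtain u where u: "u \<noteq> (0,0,0)" "A = line_of u" using assms(1) is_line_def by blast
  obtain w where w: "w \<noteq> (0,0,0)" "B = line_of w" using assms(2) is_line_def by blast
  have "is_point P" using assms(4) u by (simp add: line_of_def)
  then obtain p where p: "p \<noteq> (0,0,0)" "P = range (\<lambda>c. scale3 c p)" using is_point_def by blast
  have "is_point Q" using assms(6) u by (simp add: line_of_def)
  then obtain q where q: "q \<noteq> (0,0,0)" "Q = range (\<lambda>c. scale3 c q)" using is_point_def by blast
  have up: "dot3 u p = 0" using mem_line[OF p(2,1)] assms(4) u by simp
  have uq: "dot3 u q = 0" using mem_line[OF q(2,1)] assms(6) u by simp
  have wp: "dot3 w p = 0" using mem_line[OF p(2,1)] assms(5) w by simp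
  have wq: "dot3 w q = 0" using mem_line[OF q(2,1)] assms(7) w by simp
  define r where "r = cross3 p q"
  have rnz: "r \<noteq> (0,0,0)" using cross_zero_same[OF _ p(1) q(1)] p q ne r_def by auto
  have cr: "cross3 r x = (0,0,0)" if "dot3 x p = 0" "dot3 x q = 0" for x
  proof -
    obtain x1 x2 x3 where x: "x = (x1,x2,x3)" by (cases x) auto
    obtain p1 p2 p3 where pp: "p = (p1,p2,p3)" by (cases p) auto
    obtain q1 q2 q3 where qq: "q = (q1,q2,q3)" by (cases q) auto
    have h1: "x1*p1+x2*p2+x3*p3 = 0" "x1*q1+x2*q2+x3*q3 = 0" using that by (auto simp: dot3_def x pp qq)
    have "(p3 * q1 - p1 * q3) * x3 - (p1 * q2 - p2 * q1) * x2 = 0" using h1 by algebra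
    moreover have "(p1 * q2 - p2 * q1) * x1 - (p2 * q3 - p3 * q2) * x3 = 0" using h1 by algebra
    moreover have "(p2 * q3 - p3 * q2) * x2 - (p3 * q1 - p1 * q3) * x1 = 0" using h1 by algebra
    ultimately show ?thesis by (simp add: r_def cross3_def x pp qq)
  qed
  obtain a where a: "u = scale3 a r" using par[OF cr[OF up uq] rnz] by blast
  obtain b where b: "w = scale3 b r" using par[OF cr[OF wp wq] rnz] by blast
  have "a \<noteq> 0" using a u(1) by (cases r) (auto simp: scale3_def)
  have "b \<noteq> 0" using b w(1) by (cases r) (auto simp: scale3_def)
  have "P' \<in> line_of u \<longleftrightarrow> P' \<in> line_of w" for P'
  proof -
    have "dot3 u v = 0 \<longleftrightarrow> dot3 w v = 0" for v
      using \<open>a \<noteq> 0\<close> \<open>b \<noteq> 0\<close> by (simp add: a b dot3_scale_l)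
    from this[of "(x,y,z)" for x y z] have "(case u of (a, b, c) \<Rightarrow> a * x + b * y + c * z = 0) \<longleftrightarrow> (case w of (a, b, c) \<Rightarrow> a * x + b * y + c * z = 0)" for x y z
      by (cases u; cases w) (simp add: dot3_def)
    thus ?thesis unfolding line_of_def by simp
  qed
  hence "A = B" using u w by blast
  with assms(3) show False by simp
qed

lemma card_le1:
  fixes A B :: "'k::field ppoint set"
  assumes "is_line A" "is_line B" "A \<noteq> B" "S \<subseteq> A \<inter> B"
  shows "card S \<le> 1"
proof (cases "finite S")
  case True
  then show ?thesis using key[OF assms(1-3)] assms(4) card_le_Suc0_iff_eq[OF True] by (simp add: subset_iff)
qed simp


lemma mono_d:
  assumes "kconfig X s d Xs Ls" "1 \<le> a" "a \<le> b" "b \<le> s"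
  shows "d a + (b - a) \<le> d b"
  using assms(3,4)
proof (induction b rule: dec_induct)
  case base then show ?case by simp
next
  case (step n)
  have "d n < d (Suc n)" using assms(1,2) step by (auto simp: kconfig_def)
  then show ?case using step by simp
qed

theorem lemma2p5:
  fixes X :: "'k::field ppoint set" and s :: nat and d :: "nat \<Rightarrow> nat"
    and Xs Ls :: "nat \<Rightarrow> 'k ppoint set" and L :: "'k ppoint set"
  assumes "alg_closed TYPE('k)"
    and "kconfig X s d Xs Ls"
    and "is_line L"
    and "card (L \<inter> X) = d s"
  shows "(d s > s \<longrightarrow> L \<in> Ls ` {1..s}) \<and>
         (\<forall>i\<in>{1..s}. L = Ls i \<longrightarrow> (\<forall>j\<in>{i..s}. int (d j) = int (d s) - int s + int j))"
proof
  have K: "X = (\<Union>i\<in>{1..s}. Xs i)"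
     "\<And>i. i\<in>{1..s} \<Longrightarrow> is_line (Ls i) \<and> finite (Xs i) \<and> card (Xs i) = d i \<and> Xs i \<subseteq> Ls i"
     "inj_on Ls {1..s}"
     "\<And>i j. i\<in>{1..s} \<Longrightarrow> j\<in>{1..s} \<Longrightarrow> j < i \<Longrightarrow> Ls i \<inter> Xs j = {}"
    using assms(2) unfolding kconfig_def by auto
  have LX: "L \<inter> X = (\<Union>i\<in>{1..s}. L \<inter> Xs i)" using K(1) by blast
  show "d s > s \<longrightarrow> L \<in> Ls ` {1..s}"
  proof
    assume ds: "d s > s"
    show "L \<in> Ls ` {1..s}"
    proof (rule ccontr)
      assume nL: "L \<notin> Ls ` {1..s}"
      have "card (L \<inter> X) \<le> (\<Sum>i\<in>{1..s}. card (L \<inter> Xs i))"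
        unfolding LX by (rule card_UN_le) simp
      also have "\<dots> \<le> (\<Sum>i\<in>{1..s}. 1)"
      proof (rule sum_mono)
        fix i assume i: "i \<in> {1..s}"
        have "L \<noteq> Ls i" using nL i by blast
        then show "card (L \<inter> Xs i) \<le> 1"
          using card_le1[OF assms(3) _ _, of "Ls i" "L \<inter> Xs i"] K(2)[OF i] by blast
      qed
      finally show False using ds assms(4) by simp
    qed
  qed
  show "\<forall>i\<in>{1..s}. L = Ls i \<longrightarrow> (\<forall>j\<in>{i..s}. int (d j) = int (d s) - int s + int j)"
  proof (intro ballI impI)
    fix i j assume i: "i \<in> {1..s}" and Li: "L = Ls i" and j: "j \<in> {i..s}"
    have sub: "L \<inter> X \<subseteq> Xs i \<union> (\<Union>k\<in>{i+1..s}. L \<inter> Xs k)"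
    proof
      fix x assume "x \<in> L \<inter> X"
      then obtain k where k: "k \<in> {1..s}" "x \<in> Xs k" "x \<in> L" using K(1) by blast
      show "x \<in> Xs i \<union> (\<Union>k\<in>{i+1..s}. L \<inter> Xs k)"
      proof (cases "k < i")
        case True then show ?thesis using K(4)[OF i k(1) True] k Li by blast
      next
        case False then show ?thesis using k by (cases "k = i") auto
      qed
    qed
    have fin: "finite (Xs i \<union> (\<Union>k\<in>{i+1..s}. L \<inter> Xs k))"
      using K(2) i by auto
    have "d s \<le> card (Xs i \<union> (\<Union>k\<in>{i+1..s}. L \<inter> Xs k))"
      using card_mono[OF fin sub] assms(4) by simp
    also have "\<dots> \<le> card (Xs i) + card (\<Union>k\<in>{i+1..s}. L \<inter> Xs k)"
      by (rule card_Un_le)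
    also have "card (\<Union>k\<in>{i+1..s}. L \<inter> Xs k) \<le> (\<Sum>k\<in>{i+1..s}. card (L \<inter> Xs k))"
      by (rule card_UN_le) simp
    also have "\<dots> \<le> (\<Sum>k\<in>{i+1..s}. 1)"
    proof (rule sum_mono)
      fix k assume k: "k \<in> {i+1..s}"
      then have k1: "k \<in> {1..s}" using i by auto
      have "Ls k \<noteq> Ls i" using inj_onD[OF K(3) _ k1 i] k by auto
      then show "card (L \<inter> Xs k) \<le> 1"
        using card_le1[OF assms(3), of "Ls k" "L \<inter> Xs k"] K(2)[OF k1] Li by blast
    qed
    finally have A: "d s \<le> d i + (s - i)" using K(2)[OF i] by simp
    have B: "d i + (j - i) \<le> d j" using mono_d[OF assms(2)] i j by auto
    have C: "d j + (s - j) \<le> d s" using mono_d[OF assms(2)] i j by auto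
    show "int (d j) = int (d s) - int s + int j" using A B C i j by auto
  qed
qed

end
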